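(* Let $d\ge 1$ and let $f(t)=1+\sum_{i=1}^{d}\binom{x_i}{i}t^{i}$ be a polynomial of degree $d$ with positive real coefficients, where $x_1,\dots,x_d$ are real numbers with $x_i\ge i-1$. Suppose $f(t)$ is ultra log-concave and $x_d\ge d$. Then $x_1\ge x_2\ge\cdots\ge x_d$.
   Context: For a real number $x$ and an integer $k\ge 0$, $\binom{x}{k}=\frac{x(x-1)\cdots(x-k+1)}{k!}$. For every integer $k\ge1$ and real $y>0$ there is a unique real $x\ge k-1$ with $y=\binom{x}{k}$, so the $x_i$ are uniquely determined by the coefficients. A polynomial $a_0+a_1t+\cdots+a_dt^d$ of degree $d$ is called ultra log-concave if $\big(a_i/\binom{d}{i}\big)^2\ge \frac{a_{i-1}}{\binom{d}{i-1}}\cdot\frac{a_{i+1}}{\binom{d}{i+1}}$ for all $1\le i\le d-1$. *)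

theory Defs
  imports "HOL-Analysis.Analysis" "HOL-Computational_Algebra.Polynomial"
begin

definition ultra_log_concave :: "real poly \<Rightarrow> bool" where
  "ultra_log_concave f \<longleftrightarrow>
     (let d = degree f in
      \<forall>i. 1 \<le> i \<and> i \<le> d - 1 \<longrightarrow>
        (coeff f i / real (d choose i))^2 \<ge>
        (coeff f (i - 1) / real (d choose (i - 1))) * (coeff f (i + 1) / real (d choose (i + 1))))"

definition binom_poly :: "nat \<Rightarrow> (nat \<Rightarrow> real) \<Rightarrow> real poly" where
  "binom_poly d x = 1 + (\<Sum>i=1..d. monom (x i gchoose i) i)"

end

theory Submission
  imports Defs
begin

lemma gch_Suc: "((a::real) gchoose Suc k) = (a gchoose k) * (a - real k) / real (Suc k)"
proof -
  have "a * (a gchoose k) = of_nat k * (a gchoose k) + of_nat (Suc k) * (a gchoose (Suc k))"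
    by (rule gbinomial_mult_1)
  then show ?thesis by (simp add: field_simps del: of_nat_Suc)
qed

lemma gch_strict:
  assumes "k \<ge> 1" "real k - 1 \<le> a" "a < (b::real)"
  shows "(a gchoose k) < (b gchoose k)"
proof -
  have "(\<Prod>i=0..<k. a - of_nat i) < (\<Prod>i=0..<k. b - of_nat i)"
    apply (rule prod_mono_strict[where i=0])
    using assms by auto
  then show ?thesis unfolding gbinomial_prod_rev by (simp add: divide_strict_right_mono)
qed

lemma coeff_bp:
  "coeff (binom_poly d x) n = (if n = 0 then 1 else if n \<le> d then x n gchoose n else 0)"
  unfolding binom_poly_def by (auto simp: coeff_sum coeff_monom)

lemma lc_pow:
  fixes b :: "nat \<Rightarrow> real"
  assumes pos: "\<And>j. j \<le> d \<Longrightarrow> b j > 0"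
    and lc: "\<And>j. 1 \<le> j \<Longrightarrow> j + 1 \<le> d \<Longrightarrow> b j ^ 2 \<ge> b (j - 1) * b (j + 1)"
  shows "i + 1 \<le> d \<Longrightarrow> b (i+1) ^ i * b 0 \<le> b i ^ (i+1)"
proof (induction i)
  case 0
  then show ?case by simp
next
  case (Suc i)
  have IH: "b (i+1) ^ i * b 0 \<le> b i ^ (i+1)" using Suc by simp
  have l: "b i * b (i+2) \<le> b (i+1) ^ 2" using lc[of "i+1"] Suc.prems by simp
  have p0: "b 0 > 0" "b i > 0" "b (i+1) > 0" "b (i+2) > 0" using pos Suc.prems by auto
  have A: "(b i * b (i+2)) ^ (i+1) \<le> (b (i+1) ^ 2) ^ (i+1)"
    by (rule power_mono[OF l]) (use p0 in simp)
  have "b (i+2) ^ (i+1) * b 0 * b i ^ (i+1) = (b i * b (i+2)) ^ (i+1) * b 0"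
    by (simp add: power_mult_distrib)
  also have "\<dots> \<le> (b (i+1) ^ 2) ^ (i+1) * b 0"
    using A p0 by (simp add: mult_right_mono)
  also have "\<dots> = b (i+1) ^ (i+2) * (b (i+1) ^ i * b 0)"
    proof -
    have e: "(2::nat)*(i+1) = (i+2)+i" by simp
    have "(b (i+1) ^ 2) ^ (i+1) = b (i+1) ^ (2*(i+1))" by (simp only: power_mult)
    also have "\<dots> = b (i+1) ^ (i+2) * b (i+1) ^ i" by (simp only: e power_add)
    finally show ?thesis by (simp only: mult.assoc)
  qed
  also have "\<dots> \<le> b (i+1) ^ (i+2) * b i ^ (i+1)"
    using IH p0 by (simp add: mult_left_mono)
  finally have "b (i+2) ^ (i+1) * b 0 * b i ^ (i+1) \<le> b (i+1) ^ (i+2) * b i ^ (i+1)" .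
  then have "b (i+2) ^ (i+1) * b 0 \<le> b (i+1) ^ (i+2)"
    using p0 by (simp add: mult_le_cancel_right)
  then show ?case by (simp add: add.commute)
qed

lemma choose_Suc_real: "real (d choose Suc k) = real (d choose k) * (real d - real k) / real (Suc k)"
  unfolding binomial_gbinomial by (rule gch_Suc)

lemma g_bound:
  fixes y :: real
  assumes "real d \<le> y" "i < d"
  shows "k \<le> i \<Longrightarrow> (y gchoose k) / real (d choose k) \<le> ((y - i) / (real d - i)) ^ k"
proof (induction k)
  case 0
  then show ?case by simp
next
  case (Suc k)
  have kd: "k < d" using Suc assms by simp
  have dk: "real d - real k > 0" using kd by simp
  have di: "real d - real i > 0" using assms by simp
  have cpos: "real (d choose k) > 0" using kd by simp
  have ge0: "(y gchoose k) \<ge> 0"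
    unfolding gbinomial_prod_rev using kd assms by (auto intro!: prod_nonneg divide_nonneg_pos)
  have r: "(y - k) / (real d - k) \<le> (y - i) / (real d - i)"
  proof -
    have "(y - k) * (real d - i) \<le> (y - i) * (real d - k)"
    proof -
      have "(real i - real k) * (y - real d) \<ge> 0" using Suc.prems assms by simp
      then show ?thesis by (simp add: algebra_simps)
    qed
    then show ?thesis using dk di by (simp add: divide_simps)
  qed
  have rn: "(y - k) / (real d - k) \<ge> 0" using kd assms dk by simp
  have "(y gchoose Suc k) / real (d choose Suc k) = ((y gchoose k) / real (d choose k)) * ((y - k) / (real d - k))"
    unfolding gch_Suc choose_Suc_real using dk cpos by (simp add: field_simps del: of_nat_Suc)
  also have "\<dots> \<le> ((y - i) / (real d - i)) ^ k * ((y - i) / (real d - i))"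
    apply (rule mult_mono)
    using Suc r rn ge0 cpos by auto
  finally show ?case by (simp add: mult.commute)
qed

theorem theorem3p1:
  fixes d :: nat and x :: "nat \<Rightarrow> real"
  assumes "d \<ge> 1"
    and "\<And>i. 1 \<le> i \<Longrightarrow> i \<le> d \<Longrightarrow> x i \<ge> real i - 1"
    and "\<And>i. 1 \<le> i \<Longrightarrow> i \<le> d \<Longrightarrow> (x i gchoose i) > 0"
    and "degree (binom_poly d x) = d"
    and "ultra_log_concave (binom_poly d x)"
    and "x d \<ge> real d"
  shows "\<forall>i j. 1 \<le> i \<and> i \<le> j \<and> j \<le> d \<longrightarrow> x i \<ge> x j"
proof -
  let ?f = "binom_poly d x"
  define b where "b j = coeff ?f j / real (d choose j)" for j
  have bx: "b j = (x j gchoose j) / real (d choose j)" if "1 \<le> j" "j \<le> d" for j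
    using that by (simp add: b_def coeff_bp)
  have b0: "b 0 = 1" by (simp add: b_def coeff_bp)
  have pos: "b j > 0" if "j \<le> d" for j
  proof (cases "j = 0")
    case True then show ?thesis using b0 by simp
  next
    case False then show ?thesis using bx[of j] assms(3)[of j] that by simp
  qed
  have lc: "b j ^ 2 \<ge> b (j - 1) * b (j + 1)" if "1 \<le> j" "j + 1 \<le> d" for j
  proof -
    have h: "\<forall>i. 1 \<le> i \<and> i \<le> d - 1 \<longrightarrow> (coeff ?f i / real (d choose i))^2 \<ge>
        (coeff ?f (i - 1) / real (d choose (i - 1))) * (coeff ?f (i + 1) / real (d choose (i + 1)))"
      using assms(5) unfolding ultra_log_concave_def Let_def assms(4) .
    have "1 \<le> j \<and> j \<le> d - 1" using that by simp
    then show ?thesis using h unfolding b_def by blast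
  qed
  have stp: "x i \<ge> x (i+1)" if i1: "1 \<le> i" and id: "i < d" and yd: "x (i+1) \<ge> real d" for i
  proof (rule ccontr)
    assume "\<not> x i \<ge> x (i+1)"
    then have lt: "x i < x (i+1)" by simp
    define y where "y = x (i+1)"
    define g where "g = (y gchoose i) / real (d choose i)"
    define c where "c = (y - i) / (real d - i)"
    have P: "b (i+1) ^ i * b 0 \<le> b i ^ (i+1)"
      using lc_pow[of d b, OF pos lc] id by simp
    have gb: "g \<le> c ^ i" unfolding g_def c_def using g_bound[of d y i i] yd id y_def by simp
    have dk: "real d - real i > 0" using id by simp
    have cpos: "real (d choose i) > 0" using id by simp
    have cnn: "c \<ge> 0" unfolding c_def using yd id y_def by simp
    have gnn: "g \<ge> 0" unfolding g_def gbinomial_prod_rev using id yd y_def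
      by (auto intro!: prod_nonneg divide_nonneg_pos)
    have "b (i+1) = (y gchoose Suc i) / real (d choose Suc i)" using bx[of "i+1"] id y_def by simp
    also have "\<dots> = g * c" unfolding g_def c_def gch_Suc choose_Suc_real
      using dk cpos by (simp add: field_simps del: of_nat_Suc)
    finally have bi1: "b (i+1) = g * c" .
    have "g ^ (i+1) = g ^ i * g" by simp
    also have "\<dots> \<le> g ^ i * c ^ i" using gb gnn by (simp add: mult_left_mono)
    also have "\<dots> = b (i+1) ^ i" using bi1 by (simp add: power_mult_distrib)
    also have "\<dots> \<le> b i ^ (i+1)" using P b0 by simp
    finally have "g ^ (i+1) \<le> b i ^ (i+1)" .
    then have "g ^ Suc i \<le> b i ^ Suc i" by simp
    then have "g \<le> b i" by (rule power_le_imp_le_base) (use pos[of i] id in simp)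
    then have "(y gchoose i) \<le> (x i gchoose i)"
      unfolding g_def using bx[of i] i1 id cpos by (simp add: divide_le_cancel)
    moreover have "(x i gchoose i) < (y gchoose i)"
      using gch_strict[of i "x i" y] assms(2)[of i] i1 id lt y_def by simp
    ultimately show False by simp
  qed
  have ged: "x i \<ge> real d" if "1 \<le> i" "i \<le> d" for i
    using that
  proof (induction "d - i" arbitrary: i)
    case 0
    then have "i = d" by simp
    then show ?case using assms(6) by simp
  next
    case (Suc m)
    have "x (i+1) \<ge> real d" using Suc by simp
    moreover have "x i \<ge> x (i+1)" using stp[of i] Suc calculation by simp
    ultimately show ?case by simp
  qed
  show ?thesis
  proof (intro allI impI)
    fix i j assume h: "1 \<le> i \<and> i \<le> j \<and> j \<le> d"
    have "i \<le> j" using h by simp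
    then have "j \<le> d \<longrightarrow> x j \<le> x i"
    proof (induction j rule: dec_induct)
      case base then show ?case by simp
    next
      case (step n)
      show ?case
      proof
        assume "Suc n \<le> d"
        then have "x (n+1) \<le> x n" using step.hyps h ged[of "n+1"] stp[of n] by simp
        then show "x (Suc n) \<le> x i" using step \<open>Suc n \<le> d\<close> by simp
      qed
    qed
    then show "x i \<ge> x j" using h by simp
  qed
qed

end
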